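(* Let $Z=(W,A,X,V,E,S)\sim\mathbb{P}$, where only $(W,A,X)$ is observed. Suppose that for all $j\in\{1,\dots,J\}$: (i) $\mathbb{E}[W_j\mid A,X]=\mathbb{E}[V_jE_jS\mid A,X]$; (ii) $V_j$, $E_j$ and $S$ are mutually independent conditionally on $(A,X)$; (iii) $E_j$ is independent of $(A,X)$; and (iv) $S$ is independent of $(A,X)$. Then for every $j$, the parameter $$\Psi^{(1)}_j(\mathbb{P}):=\log\left(\frac{\mathbb{E}[V_j\mid A=1]}{\mathbb{E}[V_j\mid A=0]}\right)$$ is identifiable.
   Context: $W\in\mathbb{R}_{\ge 0}^J$ are observed category levels, $A\in\{0,1\}$ is a binary exposure, $X\in\mathcal{X}\subseteq\mathbb{R}^p$ are covariates, $V\in\mathbb{R}_{\ge0}^J$ are latent true category levels, $E\in\mathbb{R}_{>0}^J$ are latent category-specific observabilities and $S\in\mathbb{R}_{>0}$ is a latent sample-specific scale; data are i.i.d. draws from $\mathbb{P}$. The parameter is assumed well defined (the conditional means are positive and finite). $\log$ is the natural logarithm. A parameter is identifiable (under a set of assumptions) if its value is uniquely determined by the distribution of the observed variables $(W,A,X)$, i.e. any two distributions satisfying the assumptions and inducing the same distribution of $(W,A,X)$ give the same parameter value. *)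

theory Defs
  imports "HOL-Probability.Probability"
begin

definition sigma_AX :: "'a measure \<Rightarrow> ('a \<Rightarrow> real) \<Rightarrow> ('a \<Rightarrow> real^'p) \<Rightarrow> 'a measure" where
  "sigma_AX M A X = vimage_algebra (space M) (\<lambda>\<omega>. (A \<omega>, X \<omega>)) borel"

definition cond_mean :: "'a measure \<Rightarrow> ('a \<Rightarrow> real) \<Rightarrow> ('a \<Rightarrow> real) \<Rightarrow> real \<Rightarrow> real" where
  "cond_mean M Y A a =
     (\<integral>\<omega>. Y \<omega> * indicator {\<omega>\<in>space M. A \<omega> = a} \<omega> \<partial>M) / measure M {\<omega>\<in>space M. A \<omega> = a}"

definition cond_indep3 :: "'a measure \<Rightarrow> 'a measure \<Rightarrow> ('a \<Rightarrow> real) \<Rightarrow> ('a \<Rightarrow> real) \<Rightarrow> ('a \<Rightarrow> real) \<Rightarrow> bool" where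
  "cond_indep3 M F V E S \<longleftrightarrow>
     (\<forall>B1\<in>sets borel. \<forall>B2\<in>sets borel. \<forall>B3\<in>sets borel.
        AE \<omega> in M. real_cond_exp M F
                 (indicator ({x\<in>space M. V x \<in> B1} \<inter> {x\<in>space M. E x \<in> B2} \<inter> {x\<in>space M. S x \<in> B3})) \<omega>
               = real_cond_exp M F (indicator {x\<in>space M. V x \<in> B1}) \<omega>
                 * real_cond_exp M F (indicator {x\<in>space M. E x \<in> B2}) \<omega>
                 * real_cond_exp M F (indicator {x\<in>space M. S x \<in> B3}) \<omega>)"

text \<open>independence of a real random variable Y and the pair (A, X) (the library's indep_var
  requires equal codomain types, so we unfold it to independence of the generated sigma-algebras)\<close>
definition indep_of_AX :: "'a measure \<Rightarrow> ('a \<Rightarrow> real) \<Rightarrow> ('a \<Rightarrow> real) \<Rightarrow> ('a \<Rightarrow> real^'p) \<Rightarrow> bool" where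
  "indep_of_AX M Y A X \<longleftrightarrow>
     prob_space.indep_set M
       {Y -` B \<inter> space M | B. B \<in> sets (borel :: real measure)}
       {(\<lambda>\<omega>. (A \<omega>, X \<omega>)) -` C \<inter> space M | C. C \<in> sets (borel :: (real \<times> (real^'p)) measure)}"

definition model :: "'a measure \<Rightarrow> nat \<Rightarrow> (nat \<Rightarrow> 'a \<Rightarrow> real) \<Rightarrow> ('a \<Rightarrow> real) \<Rightarrow> ('a \<Rightarrow> real^'p)
     \<Rightarrow> (nat \<Rightarrow> 'a \<Rightarrow> real) \<Rightarrow> (nat \<Rightarrow> 'a \<Rightarrow> real) \<Rightarrow> ('a \<Rightarrow> real) \<Rightarrow> bool" where
  "model M J W A X V E S \<longleftrightarrow>
     prob_space M \<and>
     A \<in> borel_measurable M \<and> (\<forall>\<omega>\<in>space M. A \<omega> \<in> {0, 1}) \<and>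
     X \<in> borel_measurable M \<and>
     S \<in> borel_measurable M \<and> (\<forall>\<omega>\<in>space M. S \<omega> > 0) \<and> integrable M S \<and>
     (\<forall>a\<in>{0::real, 1}. measure M {\<omega>\<in>space M. A \<omega> = a} > 0) \<and>
     (\<forall>j\<in>{1..J}.
        W j \<in> borel_measurable M \<and> V j \<in> borel_measurable M \<and> E j \<in> borel_measurable M \<and>
        (\<forall>\<omega>\<in>space M. W j \<omega> \<ge> 0 \<and> V j \<omega> \<ge> 0 \<and> E j \<omega> > 0) \<and>
        integrable M (W j) \<and> integrable M (V j) \<and> integrable M (E j) \<and>
        integrable M (\<lambda>\<omega>. V j \<omega> * E j \<omega> * S \<omega>) \<and>
        (\<forall>a\<in>{0::real, 1}. cond_mean M (V j) A a > 0) \<and>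
        \<comment> \<open>(i)\<close>
        (AE \<omega> in M. real_cond_exp M (sigma_AX M A X) (W j) \<omega>
                    = real_cond_exp M (sigma_AX M A X) (\<lambda>\<omega>. V j \<omega> * E j \<omega> * S \<omega>) \<omega>) \<and>
        \<comment> \<open>(ii)\<close>
        cond_indep3 M (sigma_AX M A X) (V j) (E j) S \<and>
        \<comment> \<open>(iii)\<close>
        indep_of_AX M (E j) A X \<and>
        \<comment> \<open>(iv)\<close>
        indep_of_AX M S A X)"

definition observed_law :: "'a measure \<Rightarrow> nat \<Rightarrow> (nat \<Rightarrow> 'a \<Rightarrow> real) \<Rightarrow> ('a \<Rightarrow> real) \<Rightarrow> ('a \<Rightarrow> real^'p)
     \<Rightarrow> ((nat \<Rightarrow> real) \<times> real \<times> (real^'p)) measure" where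
  "observed_law M J W A X =
     distr M (PiM {1..J} (\<lambda>_. borel) \<Otimes>\<^sub>M borel \<Otimes>\<^sub>M borel)
       (\<lambda>\<omega>. (restrict (\<lambda>j. W j \<omega>) {1..J}, A \<omega>, X \<omega>))"

definition Psi1 :: "'a measure \<Rightarrow> (nat \<Rightarrow> 'a \<Rightarrow> real) \<Rightarrow> ('a \<Rightarrow> real) \<Rightarrow> nat \<Rightarrow> real" where
  "Psi1 M V A j = ln (cond_mean M (V j) A 1 / cond_mean M (V j) A 0)"

end

theory Submission
  imports Defs
begin


lemma AX_meas:
  fixes A :: "'a \<Rightarrow> real" and X :: "'a \<Rightarrow> real^'p"
  assumes [measurable]: "A \<in> borel_measurable M" "X \<in> borel_measurable M"
  shows "(\<lambda>\<omega>. (A \<omega>, X \<omega>)) \<in> borel_measurable M"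
  by measurable

lemma sets_sigma_AX:
  fixes A :: "'a \<Rightarrow> real" and X :: "'a \<Rightarrow> real^'p"
  shows "sets (sigma_AX M A X) = {(\<lambda>\<omega>. (A \<omega>, X \<omega>)) -` C \<inter> space M | C. C \<in> sets (borel :: (real \<times> (real^'p)) measure)}"
  unfolding sigma_AX_def by (rule sets_vimage_algebra2) auto

lemma space_sigma_AX[simp]: "space (sigma_AX M A X) = space M"
  unfolding sigma_AX_def by simp

lemma subalg_AX:
  fixes A :: "'a \<Rightarrow> real" and X :: "'a \<Rightarrow> real^'p"
  assumes "A \<in> borel_measurable M" "X \<in> borel_measurable M"
  shows "subalgebra M (sigma_AX M A X)"
proof -
  have m: "(\<lambda>\<omega>. (A \<omega>, X \<omega>)) \<in> borel_measurable M" using AX_meas assms by blast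
  show ?thesis unfolding subalgebra_def
    using measurable_sets[OF m] by (auto simp: sets_sigma_AX space_sigma_AX)
qed

lemma G_in_AX:
  fixes A :: "'a \<Rightarrow> real" and X :: "'a \<Rightarrow> real^'p"
  shows "{\<omega>\<in>space M. A \<omega> = a} \<in> sets (sigma_AX M A X)"
proof -
  have "{a} \<times> (UNIV :: (real^'p) set) \<in> sets borel"
    by (intro borel_closed closed_Times) auto
  moreover have "{\<omega>\<in>space M. A \<omega> = a} = (\<lambda>\<omega>. (A \<omega>, X \<omega>)) -` ({a} \<times> UNIV) \<inter> space M" by auto
  ultimately show ?thesis unfolding sets_sigma_AX by blast
qed

lemma (in prob_space) cond_exp_indep_const:
  fixes A :: "'a \<Rightarrow> real" and X :: "'a \<Rightarrow> real^'p"
  assumes [measurable]: "A \<in> borel_measurable M" "X \<in> borel_measurable M" "E \<in> borel_measurable M"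
    and ind: "indep_of_AX M E A X" and B: "B \<in> sets borel"
  shows "AE \<omega> in M. real_cond_exp M (sigma_AX M A X) (indicator {x\<in>space M. E x \<in> B}) \<omega>
           = prob {x\<in>space M. E x \<in> B}"
proof -
  interpret finite_measure_subalgebra M "sigma_AX M A X"
    by unfold_locales (rule subalg_AX; simp)
  have EB: "{x\<in>space M. E x \<in> B} \<in> events" using B by measurable
  show ?thesis
  proof (rule real_cond_exp_charact)
    fix G assume G: "G \<in> sets (sigma_AX M A X)"
    then obtain C where C: "C \<in> sets (borel :: (real \<times> (real^'p)) measure)"
      and GC: "G = (\<lambda>\<omega>. (A \<omega>, X \<omega>)) -` C \<inter> space M"
      unfolding sets_sigma_AX by blast
    have Gev: "G \<in> events" using G subalg unfolding subalgebra_def by blast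
    have "prob (E -` B \<inter> space M \<inter> G) = prob (E -` B \<inter> space M) * prob G"
      using ind C B GC unfolding indep_of_AX_def by (intro indep_setD) blast+
    moreover have "E -` B \<inter> space M = {x\<in>space M. E x \<in> B}" by auto
    ultimately have p: "prob ({x\<in>space M. E x \<in> B} \<inter> G) = prob {x\<in>space M. E x \<in> B} * prob G" by simp
    have "(\<integral>x\<in>G. indicator {x\<in>space M. E x \<in> B} x \<partial>M) = prob ({x\<in>space M. E x \<in> B} \<inter> G)"
      using EB Gev by (simp add: set_lebesgue_integral_def indicator_inter_arith[symmetric] Int_commute)
    also have "\<dots> = (\<integral>x\<in>G. prob {x\<in>space M. E x \<in> B} \<partial>M)"
      using p Gev by (simp add: set_lebesgue_integral_def mult.commute)
    finally show "(\<integral>x\<in>G. indicator {x\<in>space M. E x \<in> B} x \<partial>M) = (\<integral>x\<in>G. prob {x\<in>space M. E x \<in> B} \<partial>M)" .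
  qed (use EB in \<open>auto intro!: integrable_real_indicator simp: emeasure_eq_measure\<close>)
qed

lemma (in prob_space) key_rect:
  fixes A :: "'a \<Rightarrow> real" and X :: "'a \<Rightarrow> real^'p"
  assumes [measurable]: "A \<in> borel_measurable M" "X \<in> borel_measurable M"
    "V \<in> borel_measurable M" "E \<in> borel_measurable M" "S \<in> borel_measurable M"
    and ci: "cond_indep3 M (sigma_AX M A X) V E S"
    and indE: "indep_of_AX M E A X" and indS: "indep_of_AX M S A X"
    and G: "G \<in> sets (sigma_AX M A X)"
    and B[measurable]: "B1 \<in> sets borel" "B2 \<in> sets borel" "B3 \<in> sets borel"
  shows "prob ({x\<in>space M. V x \<in> B1} \<inter> {x\<in>space M. E x \<in> B2} \<inter> {x\<in>space M. S x \<in> B3} \<inter> G)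
       = prob ({x\<in>space M. V x \<in> B1} \<inter> G) * prob {x\<in>space M. E x \<in> B2} * prob {x\<in>space M. S x \<in> B3}"
proof -
  interpret finite_measure_subalgebra M "sigma_AX M A X"
    by unfold_locales (rule subalg_AX; simp)
  let ?F = "sigma_AX M A X"
  let ?VB = "{x\<in>space M. V x \<in> B1}"
  let ?EB = "{x\<in>space M. E x \<in> B2}"
  let ?SB = "{x\<in>space M. S x \<in> B3}"
  let ?T = "?VB \<inter> ?EB \<inter> ?SB"
  have Gev: "G \<in> events" using G subalg unfolding subalgebra_def by blast
  have [measurable]: "?VB \<in> events" "?EB \<in> events" "?SB \<in> events" by measurable
  have Tev: "?T \<in> events" by measurable
  have GF: "indicator G \<in> borel_measurable ?F" using G by simp
  have intg: "integrable M (\<lambda>x. indicator G x * indicator Y x :: real)" if "Y \<in> events" for Y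
    using that Gev by (intro integrable_real_mult_indicator integrable_real_indicator) (auto simp: emeasure_eq_measure)
  have ae1: "AE x in M. real_cond_exp M ?F (indicator ?T) x
      = real_cond_exp M ?F (indicator ?VB) x * real_cond_exp M ?F (indicator ?EB) x * real_cond_exp M ?F (indicator ?SB) x"
    using ci B unfolding cond_indep3_def by blast
  have ae2: "AE x in M. real_cond_exp M ?F (indicator ?EB) x = prob ?EB"
    by (rule cond_exp_indep_const[OF _ _ _ indE]) auto
  have ae3: "AE x in M. real_cond_exp M ?F (indicator ?SB) x = prob ?SB"
    by (rule cond_exp_indep_const[OF _ _ _ indS]) auto
  have "prob (?T \<inter> G) = (\<integral>x. indicator G x * indicator ?T x \<partial>M)"
    using Tev Gev by (simp add: indicator_inter_arith[symmetric] Int_commute)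
  also have "\<dots> = (\<integral>x. indicator G x * real_cond_exp M ?F (indicator ?T) x \<partial>M)"
    by (rule real_cond_exp_intg(2)[symmetric, OF intg[OF Tev] GF]) (use Tev in simp)
  also have "\<dots> = (\<integral>x. (prob ?EB * prob ?SB) * (indicator G x * real_cond_exp M ?F (indicator ?VB) x) \<partial>M)"
    by (rule integral_cong_AE) (use ae1 ae2 ae3 Gev in auto)
  also have "\<dots> = (prob ?EB * prob ?SB) * (\<integral>x. indicator G x * real_cond_exp M ?F (indicator ?VB) x \<partial>M)"
    by simp
  also have "(\<integral>x. indicator G x * real_cond_exp M ?F (indicator ?VB) x \<partial>M) = (\<integral>x. indicator G x * indicator ?VB x \<partial>M)"
    by (rule real_cond_exp_intg(2)[OF intg GF]) auto
  also have "(\<integral>x. indicator G x * indicator ?VB x \<partial>M) = prob (?VB \<inter> G)"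
    using Gev by (simp add: indicator_inter_arith[symmetric] Int_commute)
  finally show ?thesis by (simp add: mult_ac)
qed

lemma (in prob_space) rect_Y:
  fixes A :: "'a \<Rightarrow> real" and X :: "'a \<Rightarrow> real^'p"
  assumes [measurable]: "A \<in> borel_measurable M" "X \<in> borel_measurable M"
    "V \<in> borel_measurable M" "E \<in> borel_measurable M" "S \<in> borel_measurable M"
    and ci: "cond_indep3 M (sigma_AX M A X) V E S"
    and indE: "indep_of_AX M E A X" and indS: "indep_of_AX M S A X"
    and G: "G \<in> sets (sigma_AX M A X)"
    and B[measurable]: "B \<in> sets borel" "B2 \<in> sets borel" "B3 \<in> sets borel"
  shows "prob ((\<lambda>x. V x * indicator G x) -` B \<inter> space M \<inter> (E -` B2 \<inter> space M) \<inter> (S -` B3 \<inter> space M))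
       = prob ((\<lambda>x. V x * indicator G x) -` B \<inter> space M) * (prob (E -` B2 \<inter> space M) * prob (S -` B3 \<inter> space M))"
proof -
  have Gev: "G \<in> events" using G subalg_AX[of A M X] unfolding subalgebra_def by auto
  have GS: "G \<subseteq> space M" using Gev sets.sets_into_space by blast
  let ?EB = "{x\<in>space M. E x \<in> B2}"
  let ?SB = "{x\<in>space M. S x \<in> B3}"
  have e1: "E -` B2 \<inter> space M = ?EB" "S -` B3 \<inter> space M = ?SB" by auto
  have [measurable]: "?EB \<in> events" "?SB \<in> events" by measurable
  show ?thesis
  proof (cases "0 \<in> B")
    case False
    have "(\<lambda>x. V x * indicator G x) -` B \<inter> space M = {x\<in>space M. V x \<in> B} \<inter> G"
      using False GS by (auto simp: indicator_def of_bool_def split: if_splits)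
    moreover have "{x\<in>space M. V x \<in> B} \<inter> G \<inter> ?EB \<inter> ?SB = {x\<in>space M. V x \<in> B} \<inter> ?EB \<inter> ?SB \<inter> G" by auto
    ultimately show ?thesis unfolding e1
      using key_rect[OF assms(1-9) B] by (simp add: mult_ac)
  next
    case True
    let ?D = "{x\<in>space M. V x \<in> - B} \<inter> G"
    have [measurable]: "?D \<in> events" using Gev by measurable
    have Y: "(\<lambda>x. V x * indicator G x) -` B \<inter> space M = space M - ?D"
      using True GS by (auto simp: indicator_def of_bool_def split: if_splits)
    have "(space M - ?D) \<inter> ?EB \<inter> ?SB = (?EB \<inter> ?SB) - (?D \<inter> ?EB \<inter> ?SB)" by auto
    moreover have "?D \<inter> ?EB \<inter> ?SB \<subseteq> ?EB \<inter> ?SB" by auto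
    moreover have "?D \<inter> ?EB \<inter> ?SB \<in> events" "?EB \<inter> ?SB \<in> events" by measurable
    ultimately have h1: "prob ((space M - ?D) \<inter> ?EB \<inter> ?SB) = prob (?EB \<inter> ?SB) - prob (?D \<inter> ?EB \<inter> ?SB)"
      by (simp add: finite_measure_Diff)
    have h2: "prob (?EB \<inter> ?SB) = prob ?EB * prob ?SB"
    proof -
      have "space M \<in> sets (sigma_AX M A X)" by (metis sets.top space_sigma_AX)
      from key_rect[OF assms(1-8) this _ B(2,3), of UNIV]
      have "prob ({x \<in> space M. V x \<in> UNIV} \<inter> ?EB \<inter> ?SB \<inter> space M) = prob ({x \<in> space M. V x \<in> UNIV} \<inter> space M) * prob ?EB * prob ?SB" by simp
      moreover have "{x \<in> space M. V x \<in> UNIV} \<inter> ?EB \<inter> ?SB \<inter> space M = ?EB \<inter> ?SB" by auto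
      ultimately show ?thesis by (simp add: prob_space)
    qed
    have h3: "prob (?D \<inter> ?EB \<inter> ?SB) = prob ?D * prob ?EB * prob ?SB"
    proof -
      have "- B \<in> sets borel" by measurable
      from key_rect[OF assms(1-9) this B(2,3)]
      show ?thesis by (simp add: Int_ac)
    qed
    have h4: "prob (space M - ?D) = 1 - prob ?D"
      using finite_measure_Diff[of "space M" ?D] \<open>?D \<in> events\<close> by (auto simp: prob_space)
    show ?thesis unfolding e1 Y h4 h1 h2 h3 by (simp add: algebra_simps)
  qed
qed

lemma (in prob_space) key_integral:
  fixes A :: "'a \<Rightarrow> real" and X :: "'a \<Rightarrow> real^'p"
  assumes [measurable]: "A \<in> borel_measurable M" "X \<in> borel_measurable M"
    "V \<in> borel_measurable M" "E \<in> borel_measurable M" "S \<in> borel_measurable M"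
    and ci: "cond_indep3 M (sigma_AX M A X) V E S"
    and indE: "indep_of_AX M E A X" and indS: "indep_of_AX M S A X"
    and G: "G \<in> sets (sigma_AX M A X)"
    and iV: "integrable M V" and iE: "integrable M E" and iS: "integrable M S"
  shows "(\<integral>x. (V x * indicator G x) * (E x * S x) \<partial>M)
       = (\<integral>x. V x * indicator G x \<partial>M) * ((\<integral>x. E x \<partial>M) * (\<integral>x. S x \<partial>M))"
proof -
  have Gev[measurable]: "G \<in> events" using G subalg_AX[of A M X] unfolding subalgebra_def by auto
  define Z :: "nat \<Rightarrow> 'a \<Rightarrow> real" where
    "Z i = (if i = 0 then (\<lambda>x. V x * indicator G x) else if i = 1 then E else S)" for i
  have iZ: "integrable M (Z i)" for i
    unfolding Z_def using iV iE iS Gev by (auto intro: integrable_real_mult_indicator)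
  have Ym: "(\<lambda>x. V x * indicator G x) \<in> borel_measurable M" by measurable
  have Zm: "Z i \<in> borel_measurable M" for i
  proof -
    consider "i = 0" | "i \<noteq> 0" "i = 1" | "i \<noteq> 0" "i \<noteq> 1" by blast
    then show ?thesis
    proof cases
      case 1 then show ?thesis using Ym unfolding Z_def by (simp only: simp_thms(6) if_True)
    next
      case 2 then show ?thesis using assms(4) unfolding Z_def by (simp only: simp_thms(6) if_True if_False)
    next
      case 3 then show ?thesis using assms(5) unfolding Z_def by (simp only: if_False)
    qed
  qed
  define F where "F i = {Z i -` B \<inter> space M | B. B \<in> sets borel}" for i
  have F1: "F i \<subseteq> events" for i
    unfolding F_def using measurable_sets[OF Zm] by blast
  have F2: "space M \<in> F i" for i
  proof -
    have "space M = Z i -` UNIV \<inter> space M" by auto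
    then show ?thesis unfolding F_def by (intro CollectI) (rule exI[of _ UNIV], simp)
  qed
  have F3: "\<forall>Aa\<in>Pi {0::nat, 1, 2} F. prob (\<Inter>j\<in>{0, 1, 2}. Aa j) = (\<Prod>j\<in>{0, 1, 2}. prob (Aa j))"
  proof (intro ballI)
    fix Aa assume "Aa \<in> Pi {0::nat, 1, 2} F"
    then have "Aa 0 \<in> F 0" "Aa 1 \<in> F 1" "Aa 2 \<in> F 2" by auto
    then obtain B0 B1 B2 where B: "B0 \<in> sets borel" "B1 \<in> sets borel" "B2 \<in> sets borel"
      and A0: "Aa 0 = (\<lambda>x. V x * indicator G x) -` B0 \<inter> space M"
      and A1: "Aa 1 = E -` B1 \<inter> space M" and A2: "Aa 2 = S -` B2 \<inter> space M"
      unfolding F_def Z_def by auto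
    have "(\<Inter>j\<in>{0::nat, 1, 2}. Aa j) = Aa 0 \<inter> Aa 1 \<inter> Aa 2" by auto
    moreover have "(\<Prod>j\<in>{0::nat, 1, 2}. prob (Aa j)) = prob (Aa 0) * (prob (Aa 1) * prob (Aa 2))" by simp
    ultimately show "prob (\<Inter>j\<in>{0, 1, 2}. Aa j) = (\<Prod>j\<in>{0, 1, 2}. prob (Aa j))"
      using rect_Y[OF assms(1-9) B] unfolding A0 A1 A2 by simp
  qed
  have iff: "indep_sets F {0::nat, 1, 2} \<longleftrightarrow>
      (\<forall>Aa\<in>Pi {0::nat, 1, 2} F. prob (\<Inter>j\<in>{0, 1, 2}. Aa j) = (\<Prod>j\<in>{0, 1, 2}. prob (Aa j)))"
    by (rule indep_sets_finite) (simp_all add: F1 F2)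
  have "indep_sets F {0::nat, 1, 2}"
    unfolding iff by (rule F3)
  then have indep: "indep_vars (\<lambda>_. borel) Z {0, 1, 2}"
    unfolding indep_vars_def2 F_def using Zm by blast
  have "(\<integral>x. (\<Prod>i\<in>{0,1,2}. Z i x) \<partial>M) = (\<Prod>i\<in>{0,1,2}. \<integral>x. Z i x \<partial>M)"
    by (rule indep_vars_lebesgue_integral[OF _ indep iZ]) auto
  then show ?thesis by (simp add: Z_def)
qed



lemma pos_integral:
  fixes f :: "'a \<Rightarrow> real"
  assumes "prob_space M" "integrable M f" "\<forall>x\<in>space M. f x > 0"
  shows "(\<integral>x. f x \<partial>M) > 0"
proof -
  interpret prob_space M by fact
  have nn: "AE x in M. 0 \<le> f x" using assms(3) by (auto intro!: AE_I2 less_imp_le)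
  have ge: "(\<integral>x. f x \<partial>M) \<ge> 0" using assms(3) by (auto intro!: integral_nonneg_AE nn)
  moreover have "(\<integral>x. f x \<partial>M) \<noteq> 0"
  proof
    assume "(\<integral>x. f x \<partial>M) = 0"
    then have "AE x in M. f x = 0" using integral_nonneg_eq_0_iff_AE[OF assms(2) nn] by simp
    moreover have "AE x in M. f x > 0" using assms(3) by (auto intro!: AE_I2)
    ultimately have "AE x in M. False" by eventually_elim auto
    then show False by simp
  qed
  ultimately show ?thesis by linarith
qed

lemma cm_W_V:
  assumes m: "model M J W A X V E S" and j: "j \<in> {1..J}"
  shows "cond_mean M (W j) A a = ((\<integral>x. E j x \<partial>M) * (\<integral>x. S x \<partial>M)) * cond_mean M (V j) A a"
proof -
  interpret prob_space M using m unfolding model_def by blast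
  note mm = m[unfolded model_def]
  have [measurable]: "A \<in> borel_measurable M" "X \<in> borel_measurable M" "S \<in> borel_measurable M"
    "W j \<in> borel_measurable M" "V j \<in> borel_measurable M" "E j \<in> borel_measurable M"
    using mm j by auto
  have iW: "integrable M (W j)" and iV: "integrable M (V j)" and iE: "integrable M (E j)"
    and iS: "integrable M S" and iP: "integrable M (\<lambda>\<omega>. V j \<omega> * E j \<omega> * S \<omega>)"
    using mm j by auto
  have ae: "AE \<omega> in M. real_cond_exp M (sigma_AX M A X) (W j) \<omega>
                    = real_cond_exp M (sigma_AX M A X) (\<lambda>\<omega>. V j \<omega> * E j \<omega> * S \<omega>) \<omega>"
    and ci: "cond_indep3 M (sigma_AX M A X) (V j) (E j) S"
    and indE: "indep_of_AX M (E j) A X" and indS: "indep_of_AX M S A X"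
    using mm j by auto
  interpret finite_measure_subalgebra M "sigma_AX M A X"
    by unfold_locales (rule subalg_AX; simp)
  let ?G = "{\<omega>\<in>space M. A \<omega> = a}"
  have GF: "?G \<in> sets (sigma_AX M A X)" by (rule G_in_AX)
  have Gev: "?G \<in> events" by measurable
  have GFm: "indicator ?G \<in> borel_measurable (sigma_AX M A X)" using GF by simp
  have "(\<integral>x. W j x * indicator ?G x \<partial>M) = (\<integral>x. indicator ?G x * W j x \<partial>M)"
    by (simp add: mult.commute)
  also have "\<dots> = (\<integral>x. indicator ?G x * real_cond_exp M (sigma_AX M A X) (W j) x \<partial>M)"
    by (rule real_cond_exp_intg(2)[symmetric, OF _ GFm])
       (use integrable_real_mult_indicator[OF Gev iW] in \<open>simp_all add: mult.commute\<close>)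
  also have "\<dots> = (\<integral>x. indicator ?G x * real_cond_exp M (sigma_AX M A X) (\<lambda>\<omega>. V j \<omega> * E j \<omega> * S \<omega>) x \<partial>M)"
    by (rule integral_cong_AE) (use ae in auto)
  also have "\<dots> = (\<integral>x. indicator ?G x * (V j x * E j x * S x) \<partial>M)"
    by (rule real_cond_exp_intg(2)[OF _ GFm])
       (use integrable_real_mult_indicator[OF Gev iP] in \<open>simp_all add: mult.commute\<close>)
  also have "\<dots> = (\<integral>x. (V j x * indicator ?G x) * (E j x * S x) \<partial>M)"
    by (simp add: mult_ac)
  also have "\<dots> = (\<integral>x. V j x * indicator ?G x \<partial>M) * ((\<integral>x. E j x \<partial>M) * (\<integral>x. S x \<partial>M))"
    by (rule key_integral[where A=A and X=X]) (use ci indE indS GF iV iE iS in auto)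
  finally show ?thesis unfolding cond_mean_def by simp
qed


lemma Psi1_W:
  assumes m: "model M J W A X V E S" and j: "j \<in> {1..J}"
  shows "Psi1 M V A j = ln (cond_mean M (W j) A 1 / cond_mean M (W j) A 0)"
proof -
  note mm = m[unfolded model_def]
  have K1: "(\<integral>x. E j x \<partial>M) > 0" and K2: "(\<integral>x. S x \<partial>M) > 0"
    using mm j by (auto intro!: pos_integral)
  then have K: "(\<integral>x. E j x \<partial>M) \<noteq> 0" "(\<integral>x. S x \<partial>M) \<noteq> 0" by auto
  show ?thesis unfolding Psi1_def cm_W_V[OF m j] using K by simp
qed

lemma cm_obs:
  assumes m: "model M J W A X V E S" and j: "j \<in> {1..J}"
  shows "cond_mean M (W j) A a =
     (\<integral>z. fst z j * indicator {a} (fst (snd z)) \<partial>(observed_law M J W A X))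
     / measure (observed_law M J W A X) {z\<in>space (observed_law M J W A X). fst (snd z) = a}"
proof -
  note mm = m[unfolded model_def]
  have [measurable]: "A \<in> borel_measurable M" "X \<in> borel_measurable M"
    using mm by auto
  have Wm[measurable]: "W i \<in> borel_measurable M" if "i \<in> {1..J}" for i
    using mm that by auto
  let ?N = "PiM {1..J} (\<lambda>_. borel) \<Otimes>\<^sub>M borel \<Otimes>\<^sub>M (borel :: (real^'b) measure)"
  let ?phi = "\<lambda>\<omega>. (restrict (\<lambda>j. W j \<omega>) {1..J}, A \<omega>, X \<omega>)"
  have phi: "?phi \<in> measurable M ?N"
    by measurable
  have jm: "(\<lambda>z. fst z j * indicator {a} (fst (snd z)) :: real) \<in> borel_measurable ?N"
    using j by measurable
  have "(\<integral>z. fst z j * indicator {a} (fst (snd z)) \<partial>(observed_law M J W A X))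
      = (\<integral>\<omega>. W j \<omega> * indicator {\<omega>\<in>space M. A \<omega> = a} \<omega> \<partial>M)"
    unfolding observed_law_def integral_distr[OF phi jm] using j
    by (intro Bochner_Integration.integral_cong refl) (auto simp: indicator_def)
  moreover have "measure (observed_law M J W A X) {z\<in>space (observed_law M J W A X). fst (snd z) = a}
      = measure M {\<omega>\<in>space M. A \<omega> = a}"
  proof -
    have S: "{z\<in>space ?N. fst (snd z) = a} \<in> sets ?N" by measurable
    have "?phi -` {z\<in>space ?N. fst (snd z) = a} \<inter> space M = {\<omega>\<in>space M. A \<omega> = a}"
      using measurable_space[OF phi] by auto
    then show ?thesis unfolding observed_law_def using measure_distr[OF phi S] by simp
  qed
  ultimately show ?thesis unfolding cond_mean_def by simp
qed

theorem mainTheorem1: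
  fixes M1 :: "'a measure" and W1 V1 E1 :: "nat \<Rightarrow> 'a \<Rightarrow> real"
    and A1 S1 :: "'a \<Rightarrow> real" and X1 :: "'a \<Rightarrow> real^'p"
    and M2 :: "'b measure" and W2 V2 E2 :: "nat \<Rightarrow> 'b \<Rightarrow> real"
    and A2 S2 :: "'b \<Rightarrow> real" and X2 :: "'b \<Rightarrow> real^'p"
    and J :: nat
  assumes "model M1 J W1 A1 X1 V1 E1 S1"
    and "model M2 J W2 A2 X2 V2 E2 S2"
    and "observed_law M1 J W1 A1 X1 = observed_law M2 J W2 A2 X2"
  shows "\<forall>j\<in>{1..J}. Psi1 M1 V1 A1 j = Psi1 M2 V2 A2 j"
proof
  fix j assume j: "j \<in> {1..J}"
  have "cond_mean M1 (W1 j) A1 a = cond_mean M2 (W2 j) A2 a" for a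
    unfolding cm_obs[OF assms(1) j] cm_obs[OF assms(2) j] assms(3) ..
  then show "Psi1 M1 V1 A1 j = Psi1 M2 V2 A2 j"
    unfolding Psi1_W[OF assms(1) j] Psi1_W[OF assms(2) j] by simp
qed

end
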